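(* Let $T$, $E$ (a $\mu$-spanning $\mathbb{T}$-eigenvector field), $R$, $(e_k)$, $\sigma_k$ be as in the context. For every positive integer $n$ the series $\sum_{k\ge1}\sigma_k^2\|T^ne_k\|^2$ converges and $$\sum_{k=1}^{\infty}\sigma_k^2\|T^ne_k\|^2\le\frac{\|E\|_2^2}{2}.$$
   Context: $\mathcal{H}$ complex separable infinite-dimensional Hilbert space (inner product linear in second variable), $T$ bounded, $\mathbb{T}$ unit circle, $\mu$ normalized Lebesgue measure. $E:\mathbb{T}\to\mathcal{H}$ bounded with $TE(\lambda)=\lambda E(\lambda)$, $\mu$-spanning ($\{E(\lambda):\lambda\in A\}$ spans a dense subspace whenever $\mu(A)=1$); $\|E\|_2^2=\int\|E(\lambda)\|^2d\mu$. $R$ is the positive trace-class operator with $\langle Rx,y\rangle=\int\langle x,E(\lambda)\rangle\overline{\langle y,E(\lambda)\rangle}d\mu(\lambda)$; $(e_k)_{k\ge1}$ is an orthonormal basis of eigenvectors of $R$, $Re_k=2\sigma_k^2e_k$. *)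

theory Defs
  imports "HOL-Analysis.Analysis" "HOL-Probability.Probability"
begin

text \<open>Complex inner product spaces (HOL-Analysis only provides real ones).
  The inner product is conjugate-linear in the first and linear in the second variable.\<close>
class complex_inner_space = real_normed_vector +
  fixes scaleC :: "complex \<Rightarrow> 'a \<Rightarrow> 'a"
    and cinner :: "'a \<Rightarrow> 'a \<Rightarrow> complex"
  assumes scaleC_of_real: "scaleC (complex_of_real r) x = scaleR r x"
    and scaleC_add_left: "scaleC (a + b) x = scaleC a x + scaleC b x"
    and scaleC_add_right: "scaleC a (x + y) = scaleC a x + scaleC a y"
    and scaleC_scaleC: "scaleC a (scaleC b x) = scaleC (a * b) x"
    and cinner_commute: "cinner x y = cnj (cinner y x)"
    and cinner_add_left: "cinner (x + y) z = cinner x z + cinner y z"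
    and cinner_scaleC_left: "cinner (scaleC c x) y = cnj c * cinner x y"
    and cinner_norm: "cinner x x = complex_of_real ((norm x)\<^sup>2)"

definition cspan :: "'a::complex_inner_space set \<Rightarrow> 'a set" where
  "cspan S = {x. \<exists>F c. finite F \<and> F \<subseteq> S \<and> x = (\<Sum>v\<in>F. scaleC (c v) v)}"

definition bounded_clinear_op :: "('a::complex_inner_space \<Rightarrow> 'a) \<Rightarrow> bool" where
  "bounded_clinear_op T \<longleftrightarrow> (\<forall>x y. T (x + y) = T x + T y) \<and>
     (\<forall>c x. T (scaleC c x) = scaleC c (T x)) \<and> (\<exists>K. \<forall>x. norm (T x) \<le> norm x * K)"

definition circle_measure :: "complex measure" where
  "circle_measure = distr (uniform_measure lborel {0..2*pi}) borel cis"

end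

theory Submission
  imports Defs
begin

lemma cinner_zero_left[simp]: "cinner (0::'a::complex_inner_space) y = 0"
  using cinner_add_left[of "0::'a" 0 y] by simp
lemma cinner_zero_right[simp]: "cinner (x::'a::complex_inner_space) 0 = 0"
  by (metis cinner_commute cinner_zero_left complex_cnj_zero)
lemma cinner_add_right: "cinner (x::'a::complex_inner_space) (y + z) = cinner x y + cinner x z"
  by (metis cinner_commute cinner_add_left complex_cnj_add)
lemma cinner_scaleC_right: "cinner (x::'a::complex_inner_space) (scaleC c y) = c * cinner x y"
  by (metis cinner_commute cinner_scaleC_left complex_cnj_cnj complex_cnj_mult)
lemma cinner_minus_left: "cinner (- x::'a::complex_inner_space) y = - cinner x y"
  using cinner_add_left[of x "-x" y] by (simp add: eq_neg_iff_add_eq_0 add.commute)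
lemma cinner_diff_left: "cinner (x - z::'a::complex_inner_space) y = cinner x y - cinner z y"
  using cinner_add_left[of x "-z" y] cinner_minus_left[of z y] by simp
lemma cinner_diff_right: "cinner (x::'a::complex_inner_space) (y - z) = cinner x y - cinner x z"
  by (metis cinner_commute cinner_diff_left complex_cnj_diff)
lemma cinner_sum_left: "cinner (\<Sum>i\<in>A. f i::'a::complex_inner_space) y = (\<Sum>i\<in>A. cinner (f i) y)"
  by (induction A rule: infinite_finite_induct) (auto simp: cinner_add_left)
lemma cinner_sum_right: "cinner (x::'a::complex_inner_space) (\<Sum>i\<in>A. f i) = (\<Sum>i\<in>A. cinner x (f i))"
  by (induction A rule: infinite_finite_induct) (auto simp: cinner_add_right)
lemma scaleC_zero_right[simp]: "scaleC c (0::'a::complex_inner_space) = 0"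
  using scaleC_add_right[of c "0::'a" 0] by simp
lemma scaleC_zero_left[simp]: "scaleC 0 (x::'a::complex_inner_space) = x - x"
  using scaleC_of_real[of 0 x] by simp
lemma norm_sq_cinner: "complex_of_real ((norm (x::'a::complex_inner_space))\<^sup>2) = cinner x x"
  by (simp add: cinner_norm)
lemma cinner_self_eq_0: "cinner (x::'a::complex_inner_space) x = 0 \<longleftrightarrow> x = 0"
  by (simp add: cinner_norm)

lemma pythag:
  fixes a b :: "'a::complex_inner_space"
  assumes "cinner a b = 0"
  shows "(norm (a + b))\<^sup>2 = (norm a)\<^sup>2 + (norm b)\<^sup>2"
proof -
  have "cinner b a = 0" using assms by (metis cinner_commute complex_cnj_zero)
  then have "cinner (a+b) (a+b) = cinner a a + cinner b b"
    using assms by (simp add: cinner_add_left cinner_add_right)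
  then have "complex_of_real ((norm (a + b))\<^sup>2) = complex_of_real ((norm a)\<^sup>2 + (norm b)\<^sup>2)"
    by (simp add: cinner_norm)
  then show ?thesis using of_real_eq_iff by blast
qed

lemma cs:
  fixes x y :: "'a::complex_inner_space"
  shows "norm (cinner x y) \<le> norm x * norm y"
proof (cases "x = 0")
  case True then show ?thesis by simp
next
  case False
  define c where "c = cinner x y / complex_of_real ((norm x)\<^sup>2)"
  have nx: "norm x > 0" using False by simp
  have xx: "cinner x x = complex_of_real ((norm x)\<^sup>2)" by (simp add: cinner_norm)
  have yx: "cinner y x = cnj (cinner x y)" by (rule cinner_commute)
  have "cinner (y - scaleC c x) (y - scaleC c x)
      = cinner y y - c * cinner y x - cnj c * cinner x y + cnj c * c * cinner x x"
    by (simp add: cinner_diff_left cinner_diff_right cinner_scaleC_left cinner_scaleC_right algebra_simps)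
  also have "\<dots> = cinner y y - cinner x y * cnj (cinner x y) / complex_of_real ((norm x)\<^sup>2)"
    using nx by (simp add: c_def xx yx field_simps power2_eq_square)
  also have "cinner x y * cnj (cinner x y) = complex_of_real ((norm (cinner x y))\<^sup>2)"
    by (metis complex_norm_square of_real_power)
  finally have "complex_of_real ((norm (y - scaleC c x))\<^sup>2) =
     complex_of_real ((norm y)\<^sup>2 - (norm (cinner x y))\<^sup>2 / (norm x)\<^sup>2)"
    by (simp add: cinner_norm)
  then have "(norm (y - scaleC c x))\<^sup>2 = (norm y)\<^sup>2 - (norm (cinner x y))\<^sup>2 / (norm x)\<^sup>2"
    using of_real_eq_iff by blast
  then have "(norm (cinner x y))\<^sup>2 / (norm x)\<^sup>2 \<le> (norm y)\<^sup>2"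
    by (metis diff_ge_0_iff_ge zero_le_power2)
  then have "(norm (cinner x y))\<^sup>2 \<le> (norm x * norm y)\<^sup>2"
    using nx by (simp add: field_simps power_mult_distrib)
  then show ?thesis by (meson norm_ge_zero power2_le_imp_le mult_nonneg_nonneg)
qed

lemma bcl_add: "bounded_clinear_op S \<Longrightarrow> S (x + y) = S x + S y"
  unfolding bounded_clinear_op_def by blast
lemma bcl_scaleC: "bounded_clinear_op S \<Longrightarrow> S (scaleC c x) = scaleC c (S x)"
  unfolding bounded_clinear_op_def by blast
lemma bcl_zero: "bounded_clinear_op S \<Longrightarrow> S 0 = 0"
  using bcl_add[of S 0 0] by simp
lemma bcl_diff: "bounded_clinear_op S \<Longrightarrow> S (x - y) = S x - S y"
  using bcl_add[of S "x - y" y] by (simp add: eq_diff_eq)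
lemma bcl_sum: "bounded_clinear_op S \<Longrightarrow> S (\<Sum>i\<in>A. f i) = (\<Sum>i\<in>A. S (f i))"
  by (induction A rule: infinite_finite_induct) (auto simp: bcl_add bcl_zero)
lemma bcl_bound: "bounded_clinear_op S \<Longrightarrow> \<exists>K\<ge>0. \<forall>x. norm (S x) \<le> norm x * K"
proof -
  assume "bounded_clinear_op S"
  then obtain K where K: "\<forall>x. norm (S x) \<le> norm x * K" unfolding bounded_clinear_op_def by blast
  have "norm (S x) \<le> norm x * max K 0" for x
    using K[rule_format, of x] by (smt (verit, best) mult_left_mono norm_ge_zero)
  then show ?thesis by (intro exI[of _ "max K 0"]) auto
qed
lemma bcl_comp: "bounded_clinear_op S \<Longrightarrow> bounded_clinear_op U \<Longrightarrow> bounded_clinear_op (S \<circ> U)"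
proof -
  assume S: "bounded_clinear_op S" and U: "bounded_clinear_op U"
  obtain K where K: "K \<ge> 0" "\<forall>x. norm (S x) \<le> norm x * K" using bcl_bound[OF S] by blast
  obtain L where L: "L \<ge> 0" "\<forall>x. norm (U x) \<le> norm x * L" using bcl_bound[OF U] by blast
  have "norm (S (U x)) \<le> norm x * (L * K)" for x
  proof -
    have "norm (S (U x)) \<le> norm (U x) * K" using K by blast
    also have "\<dots> \<le> norm x * L * K" using L K by (simp add: mult_right_mono)
    finally show ?thesis by simp
  qed
  then show ?thesis using S U unfolding bounded_clinear_op_def by auto
qed
lemma bcl_id: "bounded_clinear_op (\<lambda>x::'a::complex_inner_space. x)"
  unfolding bounded_clinear_op_def by (auto intro!: exI[of _ 1])
lemma bcl_funpow: "bounded_clinear_op S \<Longrightarrow> bounded_clinear_op (S ^^ n)"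
  by (induction n) (simp_all add: bcl_id bcl_comp id_def)
lemma bcl_cont: "bounded_clinear_op S \<Longrightarrow> continuous_on UNIV S"
proof -
  assume S: "bounded_clinear_op S"
  obtain K where K: "K \<ge> 0" "\<forall>x. norm (S x) \<le> norm x * K" using bcl_bound[OF S] by blast
  have "dist (S x) (S y) \<le> (K + 1) * dist x y" for x y
    using K(2)[rule_format, of "x - y"] K(1) by (simp add: dist_norm bcl_diff[OF S] algebra_simps)
       (smt (verit) mult_nonneg_nonneg norm_ge_zero)
  then show ?thesis
    by (intro lipschitz_on_continuous_on[of "K+1"]) (auto intro!: lipschitz_onI simp: K)
qed

lemma cinner_cont: "continuous_on UNIV (cinner (x::'a::complex_inner_space))"
proof -
  have "dist (cinner x y) (cinner x z) \<le> norm x * dist y z" for y z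
    using cs[of x "y - z"] by (simp add: dist_norm cinner_diff_right)
  then show ?thesis
    by (intro lipschitz_on_continuous_on[of "norm x"]) (auto intro!: lipschitz_onI)
qed

lemma norm_comb:
  fixes w :: "'i \<Rightarrow> 'a::complex_inner_space"
  shows "complex_of_real ((norm (\<Sum>k\<in>A. scaleC (c k) (w k)))\<^sup>2)
     = (\<Sum>k\<in>A. \<Sum>l\<in>A. cnj (c k) * c l * cinner (w k) (w l))"
proof -
  have "complex_of_real ((norm (\<Sum>k\<in>A. scaleC (c k) (w k)))\<^sup>2) =
     cinner (\<Sum>k\<in>A. scaleC (c k) (w k)) (\<Sum>k\<in>A. scaleC (c k) (w k))"
    by (simp add: cinner_norm)
  also have "\<dots> = (\<Sum>k\<in>A. \<Sum>l\<in>A. cnj (c k) * c l * cinner (w k) (w l))"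
    by (simp add: cinner_sum_left cinner_sum_right cinner_scaleC_left
      cinner_scaleC_right sum_distrib_left mult.assoc)
       (subst sum.swap, simp add: algebra_simps)
  finally show ?thesis .
qed

definition proj :: "(nat \<Rightarrow> 'a::complex_inner_space) \<Rightarrow> nat \<Rightarrow> 'a \<Rightarrow> 'a" where
  "proj e N x = (\<Sum>k<N. scaleC (cinner (e k) x) (e k))"

lemma proj_orth:
  assumes on: "\<forall>i j. cinner (e i) (e j) = (if i = j then 1 else 0)" and j: "j < N"
  shows "cinner (e j) (x - proj e N x) = 0"
proof -
  have "cinner (e j) (proj e N x) = (\<Sum>k<N. cinner (e k) x * (if j = k then 1 else 0))"
    unfolding proj_def using on by (simp add: cinner_sum_right cinner_scaleC_right)
  also have "\<dots> = cinner (e j) x" using j by (simp add: if_distrib cong: if_cong)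
  finally show ?thesis by (simp add: cinner_diff_right)
qed

lemma span_orth:
  assumes on: "\<forall>i j. cinner (e i) (e j) = (if i = j then 1 else 0)"
    and y: "y \<in> cspan (e ` {..<N})"
  shows "cinner y (x - proj e N x) = 0"
proof -
  obtain F c where F: "finite F" "F \<subseteq> e ` {..<N}" "y = (\<Sum>v\<in>F. scaleC (c v) v)"
    using y unfolding cspan_def by blast
  have "cinner v (x - proj e N x) = 0" if "v \<in> F" for v
    using F(2) that proj_orth[OF on] by blast
  then show ?thesis using F(3) by (simp add: cinner_sum_left cinner_scaleC_left)
qed

lemma proj_self_orth:
  assumes on: "\<forall>i j. cinner (e i) (e j) = (if i = j then 1 else 0)"
  shows "cinner (proj e N x) (x - proj e N x) = 0"
  unfolding proj_def[of e N x] using proj_orth[OF on]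
  by (simp add: cinner_sum_left cinner_scaleC_left proj_def)

lemma best_approx:
  assumes on: "\<forall>i j. cinner (e i) (e j) = (if i = j then 1 else 0)"
    and y: "y \<in> cspan (e ` {..<N})"
  shows "norm (x - proj e N x) \<le> norm (x - y)"
proof -
  have o: "cinner (x - proj e N x) (proj e N x - y) = 0"
    using span_orth[OF on y, of x] proj_self_orth[OF on, of N x]
    by (metis cinner_commute cinner_diff_left complex_cnj_zero diff_zero)
  have "x - y = (x - proj e N x) + (proj e N x - y)" by simp
  then have "(norm (x - y))\<^sup>2 = (norm (x - proj e N x))\<^sup>2 + (norm (proj e N x - y))\<^sup>2"
    using pythag[OF o] by simp
  then show ?thesis by (smt (verit) norm_ge_zero power2_le_imp_le zero_le_power2)
qed

lemma bessel:
  assumes on: "\<forall>i j. cinner (e i) (e j) = (if i = j then 1 else 0)"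
  shows "norm (proj e N x) \<le> norm x"
proof -
  have o: "cinner (x - proj e N x) (proj e N x) = 0"
    using proj_self_orth[OF on, of N x] by (metis cinner_commute complex_cnj_zero)
  have "(norm x)\<^sup>2 = (norm (x - proj e N x))\<^sup>2 + (norm (proj e N x))\<^sup>2"
    using pythag[OF o] by simp
  then show ?thesis by (smt (verit) norm_ge_zero power2_le_imp_le zero_le_power2)
qed

lemma proj_tendsto:
  assumes on: "\<forall>i j. cinner (e i) (e j) = (if i = j then 1 else 0)"
    and comp: "closure (cspan (range e)) = UNIV"
  shows "(\<lambda>N. proj e N x) \<longlonglongrightarrow> x"
proof (rule LIMSEQ_I)
  fix r :: real assume r: "r > 0"
  have "x \<in> closure (cspan (range e))" using comp by simp
  then obtain y where y: "y \<in> cspan (range e)" "dist y x < r"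
    using r closure_approachable by blast
  obtain F c where F: "finite F" "F \<subseteq> range e" "y = (\<Sum>v\<in>F. scaleC (c v) v)"
    using y(1) unfolding cspan_def by blast
  obtain G where G: "finite G" "F = e ` G" using finite_subset_image[OF F(1) F(2)] by blast
  obtain L where L: "G \<subseteq> {..<L}" using G(1) finite_nat_bounded by blast
  show "\<exists>no. \<forall>n\<ge>no. norm (proj e n x - x) < r"
  proof (intro exI allI impI)
    fix n assume n: "L \<le> n"
    have "F \<subseteq> e ` {..<n}" using G L n by auto
    then have "y \<in> cspan (e ` {..<n})" unfolding cspan_def using F by blast
    then have "norm (x - proj e n x) \<le> norm (x - y)" by (rule best_approx[OF on])
    also have "\<dots> < r" using y(2) by (simp add: dist_norm norm_minus_commute)
    finally show "norm (proj e n x - x) < r" by (simp add: norm_minus_commute)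
  qed
qed

lemma cis_meas: "cis \<in> borel_measurable borel"
  by (intro borel_measurable_continuous_onI continuous_intros)

lemma cis_meas2: "cis \<in> borel_measurable (uniform_measure lborel {0..2*pi})"
proof -
  have "sets (uniform_measure lborel {0..2*pi}) = sets borel" by simp
  then show ?thesis using measurable_cong_sets[OF _ refl] cis_meas by blast
qed

lemma circle_prob: "prob_space circle_measure"
  unfolding circle_measure_def
  by (intro prob_space.prob_space_distr prob_space_uniform_measure) (auto simp: cis_meas2)

lemma circle_sets[simp]: "sets circle_measure = sets borel" "space circle_measure = UNIV"
  unfolding circle_measure_def by auto

lemma circle_AE: "AE z in circle_measure. z \<in> sphere 0 1"
  unfolding circle_measure_def
  by (subst AE_distr_iff) (auto simp: cis_meas2)

lemma norm_scaleC: "norm (scaleC a (x::'a::complex_inner_space)) = norm a * norm x"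
proof -
  have "complex_of_real ((norm (scaleC a x))\<^sup>2) = cinner (scaleC a x) (scaleC a x)"
    by (simp add: cinner_norm)
  also have "\<dots> = cnj a * a * cinner x x"
    by (simp add: cinner_scaleC_left cinner_scaleC_right)
  also have "\<dots> = complex_of_real ((norm a * norm x)\<^sup>2)"
  proof -
    have "cnj a * a = complex_of_real ((norm a)\<^sup>2)"
      by (metis complex_norm_square of_real_power mult.commute)
    then show ?thesis by (simp add: cinner_norm power_mult_distrib)
  qed
  finally have "(norm (scaleC a x))\<^sup>2 = (norm a * norm x)\<^sup>2" using of_real_eq_iff by blast
  then show ?thesis by (simp add: power2_eq_iff_nonneg)
qed

theorem lemma5p11:
  fixes T :: "'a::{complex_inner_space, complete_space} \<Rightarrow> 'a"
    and E :: "complex \<Rightarrow> 'a"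
    and R :: "'a \<Rightarrow> 'a"
    and e :: "nat \<Rightarrow> 'a"
    and \<sigma> :: "nat \<Rightarrow> real"
  assumes T_bounded: "bounded_clinear_op T"
    and E_meas: "E \<in> borel_measurable circle_measure"
    and E_bounded: "\<exists>C. \<forall>z\<in>sphere 0 1. norm (E z) \<le> C"
    and E_eigen: "\<forall>z\<in>sphere 0 1. T (E z) = scaleC z (E z)"
    and E_spanning: "\<forall>A\<in>sets circle_measure. A \<subseteq> sphere 0 1 \<longrightarrow>
                        measure circle_measure A = 1 \<longrightarrow> closure (cspan (E ` A)) = UNIV"
    and R_def: "\<forall>x y. cinner (R x) y =
                  integral\<^sup>L circle_measure (\<lambda>z. cinner x (E z) * cnj (cinner y (E z)))"
    and e_orthonormal: "\<forall>i j. cinner (e i) (e j) = (if i = j then 1 else 0)"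
    and e_complete: "closure (cspan (range e)) = UNIV"
    and e_eigen: "\<forall>k. R (e k) = scaleC (complex_of_real (2 * (\<sigma> k)\<^sup>2)) (e k)"
    and n_pos: "n \<ge> (1::nat)"
  shows "summable (\<lambda>k. (\<sigma> k)\<^sup>2 * (norm ((T ^^ n) (e k)))\<^sup>2) \<and>
         (\<Sum>k. (\<sigma> k)\<^sup>2 * (norm ((T ^^ n) (e k)))\<^sup>2)
           \<le> integral\<^sup>L circle_measure (\<lambda>z. (norm (E z))\<^sup>2) / 2"
proof -
  let ?M = circle_measure
  interpret P: prob_space ?M by (rule circle_prob)
  have on: "\<forall>i j. cinner (e i) (e j) = (if i = j then 1 else 0)" using e_orthonormal .
  have ne: "norm (e k) = 1" for k
  proof -
    have "cinner (e k) (e k) = 1" using on by simp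
    then have "complex_of_real ((norm (e k))\<^sup>2) = 1" by (simp only: cinner_norm)
    then have "(norm (e k))\<^sup>2 = 1" by (metis of_real_1 of_real_eq_iff)
    then show ?thesis by (smt (verit) norm_ge_zero power2_eq_1_iff)
  qed
  have Tn: "bounded_clinear_op (T ^^ n)" by (rule bcl_funpow[OF T_bounded])
  obtain K where K: "K \<ge> 0" "\<forall>x. norm ((T ^^ n) x) \<le> norm x * K" using bcl_bound[OF Tn] by blast
  obtain C where C: "\<forall>z\<in>sphere 0 1. norm (E z) \<le> C" using E_bounded by blast
  define c where "c k z = cinner (e k) (E z)" for k z
  define w where "w k = (T ^^ n) (e k)" for k
  define f where "f N z = (norm ((T ^^ n) (proj e N (E z))))\<^sup>2" for N z
  have cmeas[measurable]: "c k \<in> borel_measurable ?M" for k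
    unfolding c_def by (rule measurable_compose[OF E_meas borel_measurable_continuous_onI[OF cinner_cont]])
  have cbound: "AE z in ?M. norm (c k z) \<le> C" for k
    using circle_AE
  proof (rule AE_mp, intro AE_I2 impI)
    fix z assume "z \<in> sphere (0::complex) 1"
    then show "norm (c k z) \<le> C" unfolding c_def using cs[of "e k" "E z"] C ne by force
  qed
  have intc: "integrable ?M (\<lambda>z. cnj (c k z) * c l z)" for k l
  proof (rule P.integrable_const_bound[where B="C*C"])
    show "AE z in ?M. norm (cnj (c k z) * c l z) \<le> C * C"
      using cbound[of k] cbound[of l]
      by eventually_elim (simp add: norm_mult mult_mono' )
  next
    have cc: "cnj \<in> borel_measurable (borel :: complex measure)"
      by (intro borel_measurable_continuous_onI continuous_intros)
    show "(\<lambda>z. cnj (c k z) * c l z) \<in> borel_measurable ?M"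
      by (intro borel_measurable_times measurable_compose[OF cmeas cc] cmeas)
  qed
  have intR: "integral\<^sup>L ?M (\<lambda>z. cnj (c k z) * c l z) = (if k = l then complex_of_real (2 * (\<sigma> k)\<^sup>2) else 0)" for k l
  proof -
    have "integral\<^sup>L ?M (\<lambda>z. cnj (c k z) * c l z) = cinner (R (e l)) (e k)"
      using R_def unfolding c_def by (simp add: mult.commute)
    also have "\<dots> = (if k = l then complex_of_real (2 * (\<sigma> k)\<^sup>2) else 0)"
      using e_eigen on by (simp add: cinner_scaleC_left)
    finally show ?thesis .
  qed
  have fexp: "complex_of_real (f N z) = (\<Sum>k<N. \<Sum>l<N. cnj (c k z) * c l z * cinner (w k) (w l))" for N z
  proof -
    have "(T ^^ n) (proj e N (E z)) = (\<Sum>k<N. scaleC (c k z) (w k))"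
      unfolding proj_def c_def w_def by (simp add: bcl_sum[OF Tn] bcl_scaleC[OF Tn])
    then show ?thesis unfolding f_def by (simp only: norm_comb)
  qed
  have fmeas[measurable]: "f N \<in> borel_measurable ?M" for N
  proof -
    have "f N = (\<lambda>z. Re (\<Sum>k<N. \<Sum>l<N. cnj (c k z) * c l z * cinner (w k) (w l)))"
      using fexp by (metis Re_complex_of_real)
    then show ?thesis by simp
  qed
  have intf: "integral\<^sup>L ?M (f N) = (\<Sum>k<N. 2 * (\<sigma> k)\<^sup>2 * (norm (w k))\<^sup>2)" for N
  proof -
    have "complex_of_real (integral\<^sup>L ?M (f N)) = integral\<^sup>L ?M (\<lambda>z. complex_of_real (f N z))" by simp
    also have "\<dots> = integral\<^sup>L ?M (\<lambda>z. \<Sum>k<N. \<Sum>l<N. cnj (c k z) * c l z * cinner (w k) (w l))"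
      by (simp add: fexp)
    also have "\<dots> = (\<Sum>k<N. \<Sum>l<N. integral\<^sup>L ?M (\<lambda>z. cnj (c k z) * c l z) * cinner (w k) (w l))"
      using intc by (simp add: integral_sum integrable_sum)
    also have "\<dots> = (\<Sum>k<N. complex_of_real (2 * (\<sigma> k)\<^sup>2) * cinner (w k) (w k))"
    proof (intro sum.cong refl)
      fix k assume k: "k \<in> {..<N}"
      have "(\<Sum>l<N. integral\<^sup>L ?M (\<lambda>z. cnj (c k z) * c l z) * cinner (w k) (w l))
          = (\<Sum>l<N. if k = l then complex_of_real (2 * (\<sigma> k)\<^sup>2) * cinner (w k) (w l) else 0)"
        by (intro sum.cong refl) (simp add: intR)
      also have "\<dots> = complex_of_real (2 * (\<sigma> k)\<^sup>2) * cinner (w k) (w k)"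
        using k by (simp add: sum.delta)
      finally show "(\<Sum>l<N. integral\<^sup>L ?M (\<lambda>z. cnj (c k z) * c l z) * cinner (w k) (w l))
          = complex_of_real (2 * (\<sigma> k)\<^sup>2) * cinner (w k) (w k)" .
    qed
    also have "\<dots> = complex_of_real (\<Sum>k<N. 2 * (\<sigma> k)\<^sup>2 * (norm (w k))\<^sup>2)"
      by (simp add: cinner_norm)
    finally show ?thesis using of_real_eq_iff by blast
  qed
  have sqmeas: "(\<lambda>x::'a. (norm x)\<^sup>2) \<in> borel_measurable borel"
    by (intro borel_measurable_continuous_onI continuous_intros)
  have TEmeas: "(\<lambda>z. (norm ((T ^^ n) (E z)))\<^sup>2) \<in> borel_measurable ?M"
    using measurable_compose[OF measurable_compose[OF E_meas borel_measurable_continuous_onI[OF bcl_cont[OF Tn]]] sqmeas]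
    by (simp add: o_def)
  have lim: "(\<lambda>N. integral\<^sup>L ?M (f N)) \<longlonglongrightarrow> integral\<^sup>L ?M (\<lambda>z. (norm ((T ^^ n) (E z)))\<^sup>2)"
  proof (rule integral_dominated_convergence[where w="\<lambda>_. (C * K)\<^sup>2"])
    show "(\<lambda>z. (norm ((T ^^ n) (E z)))\<^sup>2) \<in> borel_measurable ?M" by (rule TEmeas)
    show "AE z in ?M. (\<lambda>N. f N z) \<longlonglongrightarrow> (norm ((T ^^ n) (E z)))\<^sup>2"
    proof (intro AE_I2)
      fix z
      have "isCont (T ^^ n) (E z)"
        using bcl_cont[OF Tn] continuous_on_eq_continuous_at by blast
      then have "(\<lambda>N. (T ^^ n) (proj e N (E z))) \<longlonglongrightarrow> (T ^^ n) (E z)"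
        using isCont_tendsto_compose proj_tendsto[OF on e_complete] by blast
      then show "(\<lambda>N. f N z) \<longlonglongrightarrow> (norm ((T ^^ n) (E z)))\<^sup>2"
        unfolding f_def by (intro tendsto_intros)
    qed
    show "AE z in ?M. norm (f N z) \<le> (C * K)\<^sup>2" for N
      using circle_AE
    proof (rule AE_mp, intro AE_I2 impI)
      fix z assume "z \<in> sphere (0::complex) 1"
      then have EC: "norm (E z) \<le> C" using C by blast
      have "norm ((T ^^ n) (proj e N (E z))) \<le> norm (proj e N (E z)) * K" using K by blast
      also have "\<dots> \<le> norm (E z) * K" using bessel[OF on] K by (simp add: mult_right_mono)
      also have "\<dots> \<le> C * K" using EC K by (simp add: mult_right_mono)
      finally show "norm (f N z) \<le> (C * K)\<^sup>2" unfolding f_def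
        by (simp add: power_mono)
    qed
  qed (simp_all add: fmeas)
  have same: "integral\<^sup>L ?M (\<lambda>z. (norm ((T ^^ n) (E z)))\<^sup>2) = integral\<^sup>L ?M (\<lambda>z. (norm (E z))\<^sup>2)"
  proof (rule integral_cong_AE)
    show "(\<lambda>z. (norm ((T ^^ n) (E z)))\<^sup>2) \<in> borel_measurable ?M" by (rule TEmeas)
    show "(\<lambda>z. (norm (E z))\<^sup>2) \<in> borel_measurable ?M"
      by (rule measurable_compose[OF E_meas sqmeas])
    show "AE z in ?M. (norm ((T ^^ n) (E z)))\<^sup>2 = (norm (E z))\<^sup>2"
      using circle_AE
    proof (rule AE_mp, intro AE_I2 impI)
      fix z :: complex assume z: "z \<in> sphere 0 1"
      have "(T ^^ m) (E z) = scaleC (z ^ m) (E z)" for m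
      proof (induction m)
        case 0 then show ?case using scaleC_of_real[of 1 "E z"] by simp
      next
        case (Suc m)
        then show ?case using E_eigen z by (simp add: bcl_scaleC[OF T_bounded] scaleC_scaleC mult.commute)
      qed
      then show "(norm ((T ^^ n) (E z)))\<^sup>2 = (norm (E z))\<^sup>2"
        using z by (simp add: norm_scaleC norm_power)
    qed
  qed
  define g where "g k = (\<sigma> k)\<^sup>2 * (norm ((T ^^ n) (e k)))\<^sup>2" for k
  have gN: "(\<Sum>k<N. g k) = integral\<^sup>L ?M (f N) / 2" for N
  proof -
    have "integral\<^sup>L ?M (f N) / 2 = (\<Sum>k<N. 2 * (\<sigma> k)\<^sup>2 * (norm (w k))\<^sup>2 / 2)"
      by (simp only: intf sum_divide_distrib)
    also have "\<dots> = (\<Sum>k<N. g k)" unfolding g_def w_def by (intro sum.cong refl) simp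
    finally show ?thesis by simp
  qed
  then have "(\<lambda>N. \<Sum>k<N. g k) = (\<lambda>N. integral\<^sup>L ?M (f N) / 2)" by (rule ext)
  then have "(\<lambda>N. \<Sum>k<N. g k) \<longlonglongrightarrow> integral\<^sup>L ?M (\<lambda>z. (norm (E z))\<^sup>2) / 2"
    using tendsto_divide[OF lim tendsto_const[of 2]] same by simp
  then have gs: "g sums (integral\<^sup>L ?M (\<lambda>z. (norm (E z))\<^sup>2) / 2)"
    unfolding sums_def .
  have s1: "summable g" using gs by (rule sums_summable)
  have s2: "suminf g = integral\<^sup>L ?M (\<lambda>z. (norm (E z))\<^sup>2) / 2" using sums_unique[OF gs] by (rule sym)
  have geq: "(\<lambda>k. (\<sigma> k)\<^sup>2 * (norm ((T ^^ n) (e k)))\<^sup>2) = g" by (rule ext) (simp only: g_def)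
  show ?thesis unfolding geq using s1 s2 by simp
qed

end
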